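(* Let $\mathcal V$ be a congruence-modular variety and $A\in\mathcal V$ such that $[\theta,\nabla_A]_A=\theta$ for all $\theta\in\mathrm{Con}(A)$. Then $A/\theta^\perp$ is semiprime for every $\theta\in\mathrm{Con}(A)$ if and only if $A$ is semiprime.
   Context: For an algebra $M$, $\mathrm{Con}(M)$ is its congruence lattice with bottom $\Delta_M$ and top $\nabla_M=M^2$, and $[\cdot,\cdot]_M$ is the term condition commutator: for $\alpha,\beta,\mu\in\mathrm{Con}(M)$, $C(\alpha,\beta;\mu)$ means that for all $n,k$, every $(n+k)$-ary term $t$, all $(a_i,b_i)\in\alpha$ and $(c_j,d_j)\in\beta$: $(t(\bar a,\bar c),t(\bar a,\bar d))\in\mu$ iff $(t(\bar b,\bar c),t(\bar b,\bar d))\in\mu$; $[\alpha,\beta]_M=\bigcap\{\mu: C(\alpha,\beta;\mu)\}$. A congruence $\phi\neq\nabla_M$ is prime if $[\alpha,\beta]_M\subseteq\phi$ implies $\alpha\subseteq\phi$ or $\beta\subseteq\phi$; $\rho_M(\theta)$ is the intersection of all prime congruences containing $\theta$ (equal to $\nabla_M$ if there are none); $M$ is semiprime if $\rho_M(\Delta_M)=\Delta_M$. For $\beta\in\mathrm{Con}(A)$, $\beta^\perp=\bigvee\{\alpha\in\mathrm{Con}(A):[\alpha,\beta]_A=\Delta_A\}$. *)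

theory Defs
  imports Main
begin

record ('f, 'a) alg =
  carrier :: "'a set"
  ops :: "'f \<Rightarrow> 'a list \<Rightarrow> 'a"

definition algebra :: "('f \<Rightarrow> nat) \<Rightarrow> ('f, 'a) alg \<Rightarrow> bool" where
  "algebra ar M \<longleftrightarrow> carrier M \<noteq> {} \<and>
     (\<forall>f xs. length xs = ar f \<and> set xs \<subseteq> carrier M \<longrightarrow> ops M f xs \<in> carrier M)"

datatype 'f trm = Var nat | Fn 'f "'f trm list"

fun wf_trm :: "('f \<Rightarrow> nat) \<Rightarrow> 'f trm \<Rightarrow> bool" where
  "wf_trm ar (Var i) = True"
| "wf_trm ar (Fn f ts) = (length ts = ar f \<and> (\<forall>t\<in>set ts. wf_trm ar t))"

fun vars :: "'f trm \<Rightarrow> nat set" where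
  "vars (Var i) = {i}"
| "vars (Fn f ts) = (\<Union>t\<in>set ts. vars t)"

fun eval :: "('f, 'a) alg \<Rightarrow> (nat \<Rightarrow> 'a) \<Rightarrow> 'f trm \<Rightarrow> 'a" where
  "eval M v (Var i) = v i"
| "eval M v (Fn f ts) = ops M f (map (eval M v) ts)"

definition Delta :: "('f, 'a) alg \<Rightarrow> 'a rel" where
  "Delta M = Id_on (carrier M)"

definition Nabla :: "('f, 'a) alg \<Rightarrow> 'a rel" where
  "Nabla M = carrier M \<times> carrier M"

definition congruence :: "('f \<Rightarrow> nat) \<Rightarrow> ('f, 'a) alg \<Rightarrow> 'a rel \<Rightarrow> bool" where
  "congruence ar M \<theta> \<longleftrightarrow> equiv (carrier M) \<theta> \<and>
     (\<forall>f xs ys. length xs = ar f \<and> length ys = ar f \<and> list_all2 (\<lambda>x y. (x, y) \<in> \<theta>) xs ys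
        \<longrightarrow> (ops M f xs, ops M f ys) \<in> \<theta>)"

definition Con :: "('f \<Rightarrow> nat) \<Rightarrow> ('f, 'a) alg \<Rightarrow> 'a rel set" where
  "Con ar M = {\<theta>. congruence ar M \<theta>}"

definition Cg :: "('f \<Rightarrow> nat) \<Rightarrow> ('f, 'a) alg \<Rightarrow> 'a rel \<Rightarrow> 'a rel" where
  "Cg ar M R = \<Inter>{\<theta> \<in> Con ar M. R \<subseteq> \<theta>}"

definition con_join :: "('f \<Rightarrow> nat) \<Rightarrow> ('f, 'a) alg \<Rightarrow> 'a rel \<Rightarrow> 'a rel \<Rightarrow> 'a rel" where
  "con_join ar M \<alpha> \<beta> = Cg ar M (\<alpha> \<union> \<beta>)"

definition cong_modular :: "('f \<Rightarrow> nat) \<Rightarrow> ('f, 'a) alg \<Rightarrow> bool" where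
  "cong_modular ar M \<longleftrightarrow> (\<forall>\<alpha>\<in>Con ar M. \<forall>\<beta>\<in>Con ar M. \<forall>\<gamma>\<in>Con ar M. \<alpha> \<subseteq> \<gamma> \<longrightarrow>
      con_join ar M \<alpha> (\<beta> \<inter> \<gamma>) = con_join ar M \<alpha> \<beta> \<inter> \<gamma>)"

definition env2 :: "nat \<Rightarrow> (nat \<Rightarrow> 'a) \<Rightarrow> (nat \<Rightarrow> 'a) \<Rightarrow> nat \<Rightarrow> 'a" where
  "env2 n a c = (\<lambda>i. if i < n then a i else c (i - n))"

definition TC :: "('f \<Rightarrow> nat) \<Rightarrow> ('f, 'a) alg \<Rightarrow> 'a rel \<Rightarrow> 'a rel \<Rightarrow> 'a rel \<Rightarrow> bool" where
  "TC ar M \<alpha> \<beta> \<mu> \<longleftrightarrow>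
    (\<forall>n k t a b c d. wf_trm ar t \<and> vars t \<subseteq> {..<n + k} \<and>
       (\<forall>i<n. (a i, b i) \<in> \<alpha>) \<and> (\<forall>j<k. (c j, d j) \<in> \<beta>) \<longrightarrow>
       ((eval M (env2 n a c) t, eval M (env2 n a d) t) \<in> \<mu> \<longleftrightarrow>
        (eval M (env2 n b c) t, eval M (env2 n b d) t) \<in> \<mu>))"

definition commutator :: "('f \<Rightarrow> nat) \<Rightarrow> ('f, 'a) alg \<Rightarrow> 'a rel \<Rightarrow> 'a rel \<Rightarrow> 'a rel" where
  "commutator ar M \<alpha> \<beta> = \<Inter>{\<mu> \<in> Con ar M. TC ar M \<alpha> \<beta> \<mu>}"

definition prime_con :: "('f \<Rightarrow> nat) \<Rightarrow> ('f, 'a) alg \<Rightarrow> 'a rel \<Rightarrow> bool" where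
  "prime_con ar M \<phi> \<longleftrightarrow> \<phi> \<in> Con ar M \<and> \<phi> \<noteq> Nabla M \<and>
     (\<forall>\<alpha>\<in>Con ar M. \<forall>\<beta>\<in>Con ar M. commutator ar M \<alpha> \<beta> \<subseteq> \<phi> \<longrightarrow> \<alpha> \<subseteq> \<phi> \<or> \<beta> \<subseteq> \<phi>)"

text \<open>Intersection of all primes above theta; equals Nabla when there are none.\<close>
definition radical :: "('f \<Rightarrow> nat) \<Rightarrow> ('f, 'a) alg \<Rightarrow> 'a rel \<Rightarrow> 'a rel" where
  "radical ar M \<theta> = Nabla M \<inter> \<Inter>{\<phi>. prime_con ar M \<phi> \<and> \<theta> \<subseteq> \<phi>}"

definition semiprime :: "('f \<Rightarrow> nat) \<Rightarrow> ('f, 'a) alg \<Rightarrow> bool" where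
  "semiprime ar M \<longleftrightarrow> radical ar M (Delta M) = Delta M"

definition annihilator :: "('f \<Rightarrow> nat) \<Rightarrow> ('f, 'a) alg \<Rightarrow> 'a rel \<Rightarrow> 'a rel" where
  "annihilator ar M \<beta> = Cg ar M (\<Union>{\<alpha> \<in> Con ar M. commutator ar M \<alpha> \<beta> = Delta M})"

definition quot_alg :: "('f, 'a) alg \<Rightarrow> 'a rel \<Rightarrow> ('f, 'a set) alg" where
  "quot_alg M \<theta> = \<lparr> carrier = carrier M // \<theta>,
     ops = (\<lambda>f Xs. \<theta> `` {ops M f (map (\<lambda>X. SOME x. x \<in> X) Xs)}) \<rparr>"

definition satisfies :: "('f, 'a) alg \<Rightarrow> ('f trm \<times> 'f trm) set \<Rightarrow> bool" where
  "satisfies M \<Sigma> \<longleftrightarrow> (\<forall>(s, t)\<in>\<Sigma>. \<forall>v. (\<forall>i. v i \<in> carrier M) \<longrightarrow> eval M v s = eval M v t)"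

end

theory Submission
  imports Defs
begin


lemma con_sub: "\<theta> \<in> Con ar M \<Longrightarrow> \<theta> \<subseteq> carrier M \<times> carrier M"
  by (auto simp: Con_def congruence_def equiv_def)

lemma con_equiv: "\<theta> \<in> Con ar M \<Longrightarrow> equiv (carrier M) \<theta>"
  by (auto simp: Con_def congruence_def)

lemma con_refl: "\<theta> \<in> Con ar M \<Longrightarrow> x \<in> carrier M \<Longrightarrow> (x,x) \<in> \<theta>"
  by (auto simp: Con_def congruence_def equiv_def refl_on_def)

lemma con_sym: "\<theta> \<in> Con ar M \<Longrightarrow> (x,y) \<in> \<theta> \<Longrightarrow> (y,x) \<in> \<theta>"
  by (auto simp: Con_def congruence_def equiv_def sym_def)

lemma con_trans: "\<theta> \<in> Con ar M \<Longrightarrow> (x,y) \<in> \<theta> \<Longrightarrow> (y,z) \<in> \<theta> \<Longrightarrow> (x,z) \<in> \<theta>"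
  unfolding Con_def congruence_def equiv_def trans_def by blast

lemma con_ops: "\<theta> \<in> Con ar M \<Longrightarrow> length xs = ar f \<Longrightarrow> length ys = ar f \<Longrightarrow>
   list_all2 (\<lambda>x y. (x, y) \<in> \<theta>) xs ys \<Longrightarrow> (ops M f xs, ops M f ys) \<in> \<theta>"
  by (auto simp: Con_def congruence_def)

lemma Delta_sub: "\<theta> \<in> Con ar M \<Longrightarrow> Delta M \<subseteq> \<theta>"
  by (auto simp: Delta_def con_refl)

lemma Nabla_Con: "algebra ar M \<Longrightarrow> Nabla M \<in> Con ar M"
  unfolding Con_def congruence_def mem_Collect_eq
proof (intro conjI allI impI)
  show "equiv (carrier M) (Nabla M)" by (auto simp: Nabla_def equiv_def refl_on_def sym_def trans_def)
  fix f xs ys assume alg: "algebra ar M" and h: "length xs = ar f \<and> length ys = ar f \<and> list_all2 (\<lambda>x y. (x, y) \<in> Nabla M) xs ys"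
  hence a: "list_all2 (\<lambda>x y. (x, y) \<in> carrier M \<times> carrier M) xs ys" by (simp add: Nabla_def)
  have "set xs \<subseteq> carrier M \<and> set ys \<subseteq> carrier M" using a by (induct rule: list_all2_induct) auto
  thus "(ops M f xs, ops M f ys) \<in> Nabla M" using alg h unfolding algebra_def Nabla_def by blast
qed

lemma Delta_Con: assumes alg: "algebra ar M" shows "Delta M \<in> Con ar M"
  unfolding Con_def congruence_def mem_Collect_eq
proof (intro conjI allI impI)
  show "equiv (carrier M) (Delta M)" by (auto simp: Delta_def equiv_def refl_on_def sym_def trans_def)
  fix f xs ys assume h: "length xs = ar f \<and> length ys = ar f \<and> list_all2 (\<lambda>x y. (x, y) \<in> Delta M) xs ys"
  hence a: "list_all2 (\<lambda>x y. (x, y) \<in> Id_on (carrier M)) xs ys" by (simp add: Delta_def)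
  have "xs = ys" using a by (induct rule: list_all2_induct) auto
  moreover have "set xs \<subseteq> carrier M" using a by (induct rule: list_all2_induct) auto
  ultimately show "(ops M f xs, ops M f ys) \<in> Delta M" using alg h by (auto simp: algebra_def Delta_def)
qed

lemma Inter_Con: assumes "algebra ar M" "S \<subseteq> Con ar M" shows "Nabla M \<inter> \<Inter>S \<in> Con ar M"
proof -
  have N: "Nabla M \<in> Con ar M" using Nabla_Con[OF assms(1)] .
  define T where "T = insert (Nabla M) S"
  have eq: "Nabla M \<inter> \<Inter>S = \<Inter>T" unfolding T_def by auto
  have c: "\<And>\<theta>. \<theta> \<in> T \<Longrightarrow> \<theta> \<in> Con ar M" using N assms(2) unfolding T_def by auto
  have "\<Inter>T \<in> Con ar M"
    unfolding Con_def congruence_def mem_Collect_eq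
  proof (intro conjI allI impI)
    show "equiv (carrier M) (\<Inter>T)"
    proof (rule equivI)
      show "\<Inter>T \<subseteq> carrier M \<times> carrier M" using con_sub[OF N] unfolding T_def by auto
      show "refl_on (carrier M) (\<Inter>T)" unfolding refl_on_def
      proof (intro ballI InterI)
        fix x \<theta> assume "x \<in> carrier M" "\<theta> \<in> T" thus "(x,x) \<in> \<theta>" using c con_refl by metis
      qed
      show "sym (\<Inter>T)" unfolding sym_def
      proof (intro allI impI InterI)
        fix x y \<theta> assume "(x,y) \<in> \<Inter>T" "\<theta> \<in> T"
        hence "(x,y) \<in> \<theta>" by auto
        thus "(y,x) \<in> \<theta>" using c \<open>\<theta> \<in> T\<close> con_sym by metis
      qed
      show "trans (\<Inter>T)" unfolding trans_def
      proof (intro allI impI InterI)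
        fix x y z \<theta> assume "(x,y) \<in> \<Inter>T" "(y,z) \<in> \<Inter>T" "\<theta> \<in> T"
        hence "(x,y) \<in> \<theta>" "(y,z) \<in> \<theta>" by auto
        thus "(x,z) \<in> \<theta>" using c \<open>\<theta> \<in> T\<close> con_trans by metis
      qed
    qed
    fix f xs ys assume h: "length xs = ar f \<and> length ys = ar f \<and> list_all2 (\<lambda>x y. (x, y) \<in> \<Inter>T) xs ys"
    show "(ops M f xs, ops M f ys) \<in> \<Inter>T"
    proof
      fix \<theta> assume "\<theta> \<in> T"
      hence cc: "\<theta> \<in> Con ar M" using c by auto
      have "list_all2 (\<lambda>x y. (x, y) \<in> \<theta>) xs ys"
        using h \<open>\<theta> \<in> T\<close> by (auto elim: list_all2_mono)
      thus "(ops M f xs, ops M f ys) \<in> \<theta>" using con_ops[OF cc] h by auto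
    qed
  qed
  thus ?thesis using eq by simp
qed

lemma Cg_Con: assumes "algebra ar M" "R \<subseteq> Nabla M" shows "Cg ar M R \<in> Con ar M"
proof -
  have N: "Nabla M \<in> Con ar M" using Nabla_Con[OF assms(1)] .
  have "Cg ar M R = Nabla M \<inter> \<Inter>{\<theta> \<in> Con ar M. R \<subseteq> \<theta>}"
    unfolding Cg_def using N assms(2) by auto
  moreover have "Nabla M \<inter> \<Inter>{\<theta> \<in> Con ar M. R \<subseteq> \<theta>} \<in> Con ar M"
    by (rule Inter_Con[OF assms(1)]) auto
  ultimately show ?thesis by simp
qed

lemma Cg_least: "\<theta> \<in> Con ar M \<Longrightarrow> R \<subseteq> \<theta> \<Longrightarrow> Cg ar M R \<subseteq> \<theta>"
  unfolding Cg_def by auto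

lemma Cg_upper: "R \<subseteq> Cg ar M R"
  unfolding Cg_def by auto

lemma eval_carrier: "algebra ar M \<Longrightarrow> wf_trm ar t \<Longrightarrow> (\<forall>i\<in>vars t. v i \<in> carrier M) \<Longrightarrow> eval M v t \<in> carrier M"
proof (induct t)
  case (Var x) then show ?case by simp
next
  case (Fn f ts)
  have "set (map (eval M v) ts) \<subseteq> carrier M" using Fn by auto
  then show ?case using Fn(2,3) by (auto simp: algebra_def)
qed

lemma eval_cong: "\<theta> \<in> Con ar M \<Longrightarrow> wf_trm ar t \<Longrightarrow> (\<forall>i\<in>vars t. (v i, w i) \<in> \<theta>) \<Longrightarrow> (eval M v t, eval M w t) \<in> \<theta>"
proof (induct t)
  case (Var x) then show ?case by simp
next
  case (Fn f ts)
  have "list_all2 (\<lambda>x y. (x, y) \<in> \<theta>) (map (eval M v) ts) (map (eval M w) ts)"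
    using Fn by (auto simp: list_all2_conv_all_nth)
  then show ?case using Fn(2,3) con_ops[OF Fn(2)] by auto
qed



lemma env_cong_left:
  assumes \<alpha>: "\<alpha> \<in> Con ar M" and \<beta>: "\<beta> \<subseteq> Nabla M" and t: "wf_trm ar t" "vars t \<subseteq> {..<n + k}"
    and ab: "\<forall>i<n. (a i, b i) \<in> \<alpha>" and cd: "\<forall>j<k. (c j, d j) \<in> \<beta>"
  shows "(eval M (env2 n a c) t, eval M (env2 n b c) t) \<in> \<alpha>"
proof (rule eval_cong[OF \<alpha> t(1)], intro ballI)
  fix i assume i: "i \<in> vars t"
  show "(env2 n a c i, env2 n b c i) \<in> \<alpha>"
  proof (cases "i < n")
    case True thus ?thesis using ab by (simp add: env2_def)
  next
    case False
    hence "i - n < k" using i t(2) by auto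
    hence "c (i - n) \<in> carrier M" using cd \<beta> by (auto simp: Nabla_def)
    thus ?thesis using False con_refl[OF \<alpha>] by (simp add: env2_def)
  qed
qed

lemma env_cong_right:
  assumes \<beta>: "\<beta> \<in> Con ar M" and \<alpha>: "\<alpha> \<subseteq> Nabla M" and t: "wf_trm ar t" "vars t \<subseteq> {..<n + k}"
    and ab: "\<forall>i<n. (a i, b i) \<in> \<alpha>" and cd: "\<forall>j<k. (c j, d j) \<in> \<beta>"
  shows "(eval M (env2 n a c) t, eval M (env2 n a d) t) \<in> \<beta>"
proof (rule eval_cong[OF \<beta> t(1)], intro ballI)
  fix i assume i: "i \<in> vars t"
  show "(env2 n a c i, env2 n a d i) \<in> \<beta>"
  proof (cases "i < n")
    case True
    hence "a i \<in> carrier M" using ab \<alpha> by (auto simp: Nabla_def)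
    thus ?thesis using True con_refl[OF \<beta>] by (simp add: env2_def)
  next
    case False
    hence "i - n < k" using i t(2) by auto
    thus ?thesis using False cd by (simp add: env2_def)
  qed
qed

lemma env_carrier:
  assumes alg: "algebra ar M" and \<alpha>: "\<alpha> \<subseteq> Nabla M" and \<beta>: "\<beta> \<subseteq> Nabla M" and t: "wf_trm ar t" "vars t \<subseteq> {..<n + k}"
    and ab: "\<forall>i<n. (a i, b i) \<in> \<alpha>" and cd: "\<forall>j<k. (c j, d j) \<in> \<beta>"
  shows "eval M (env2 n a c) t \<in> carrier M" "eval M (env2 n a d) t \<in> carrier M"
        "eval M (env2 n b c) t \<in> carrier M" "eval M (env2 n b d) t \<in> carrier M"
proof -
  have A: "\<forall>i<n. a i \<in> carrier M \<and> b i \<in> carrier M" using ab \<alpha> by (auto simp: Nabla_def)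
  have C: "\<forall>j<k. c j \<in> carrier M \<and> d j \<in> carrier M" using cd \<beta> by (auto simp: Nabla_def)
  have "\<And>x y. (\<forall>i<n. x i \<in> carrier M) \<Longrightarrow> (\<forall>j<k. y j \<in> carrier M) \<Longrightarrow> eval M (env2 n x y) t \<in> carrier M"
  proof -
    fix x y assume x: "\<forall>i<n. x i \<in> carrier M" and y: "\<forall>j<k. y j \<in> carrier M"
    show "eval M (env2 n x y) t \<in> carrier M"
    proof (rule eval_carrier[OF alg t(1)], intro ballI)
      fix i assume "i \<in> vars t" hence "i < n + k" using t(2) by auto
      thus "env2 n x y i \<in> carrier M" using x y by (auto simp: env2_def)
    qed
  qed
  thus "eval M (env2 n a c) t \<in> carrier M" "eval M (env2 n a d) t \<in> carrier M"
        "eval M (env2 n b c) t \<in> carrier M" "eval M (env2 n b d) t \<in> carrier M"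
    using A C by auto
qed

lemma TC_Nabla: assumes "algebra ar M" "\<alpha> \<subseteq> Nabla M" "\<beta> \<subseteq> Nabla M" shows "TC ar M \<alpha> \<beta> (Nabla M)"
  unfolding TC_def
proof (intro allI impI)
  fix n k t a b c d
  assume h: "wf_trm ar t \<and> vars t \<subseteq> {..<n + k} \<and> (\<forall>i<n. (a i, b i) \<in> \<alpha>) \<and> (\<forall>j<k. (c j, d j) \<in> \<beta>)"
  note e = env_carrier[OF assms, of t n k a b c d]
  show "((eval M (env2 n a c) t, eval M (env2 n a d) t) \<in> Nabla M) =
         ((eval M (env2 n b c) t, eval M (env2 n b d) t) \<in> Nabla M)"
    using e h by (auto simp: Nabla_def)
qed

lemma TC_right: assumes "\<alpha> \<subseteq> Nabla M" "\<beta> \<in> Con ar M" shows "TC ar M \<alpha> \<beta> \<beta>"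
  unfolding TC_def
proof (intro allI impI)
  fix n k t a b c d
  assume h: "wf_trm ar t \<and> vars t \<subseteq> {..<n + k} \<and> (\<forall>i<n. (a i, b i) \<in> \<alpha>) \<and> (\<forall>j<k. (c j, d j) \<in> \<beta>)"
  have "\<forall>i<n. (b i, a i) \<in> \<alpha>\<inverse>" using h by auto
  have 1: "(eval M (env2 n a c) t, eval M (env2 n a d) t) \<in> \<beta>"
    using env_cong_right[OF assms(2) assms(1)] h by blast
  have sb: "\<forall>i<n. (b i, b i) \<in> Nabla M" using h assms(1) by (auto simp: Nabla_def)
  have 2: "(eval M (env2 n b c) t, eval M (env2 n b d) t) \<in> \<beta>"
    using env_cong_right[OF assms(2), of "Nabla M" t n k b b c d] h sb by auto
  show "((eval M (env2 n a c) t, eval M (env2 n a d) t) \<in> \<beta>) =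
         ((eval M (env2 n b c) t, eval M (env2 n b d) t) \<in> \<beta>)" using 1 2 by simp
qed

lemma TC_left: assumes "\<alpha> \<in> Con ar M" "\<beta> \<subseteq> Nabla M" shows "TC ar M \<alpha> \<beta> \<alpha>"
  unfolding TC_def
proof (intro allI impI)
  fix n k t a b c d
  assume h: "wf_trm ar t \<and> vars t \<subseteq> {..<n + k} \<and> (\<forall>i<n. (a i, b i) \<in> \<alpha>) \<and> (\<forall>j<k. (c j, d j) \<in> \<beta>)"
  have 1: "(eval M (env2 n a c) t, eval M (env2 n b c) t) \<in> \<alpha>"
    using env_cong_left[OF assms] h by blast
  have 2: "(eval M (env2 n a d) t, eval M (env2 n b d) t) \<in> \<alpha>"
    using env_cong_left[OF assms(1), of "Nabla M" t n k a b d d] h assms(2) by (auto simp: Nabla_def)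
  show "((eval M (env2 n a c) t, eval M (env2 n a d) t) \<in> \<alpha>) =
         ((eval M (env2 n b c) t, eval M (env2 n b d) t) \<in> \<alpha>)"
    using 1 2 con_sym[OF assms(1)] con_trans[OF assms(1)] by meson
qed

lemma comm_props:
  assumes alg: "algebra ar M" and "\<alpha> \<in> Con ar M" "\<beta> \<in> Con ar M"
  shows "Delta M \<subseteq> commutator ar M \<alpha> \<beta>" "commutator ar M \<alpha> \<beta> \<subseteq> \<alpha>" "commutator ar M \<alpha> \<beta> \<subseteq> \<beta>"
    "commutator ar M \<alpha> \<beta> \<subseteq> Nabla M"
proof -
  have s: "\<alpha> \<subseteq> Nabla M" "\<beta> \<subseteq> Nabla M" using assms con_sub by (auto simp: Nabla_def)
  show "Delta M \<subseteq> commutator ar M \<alpha> \<beta>" unfolding commutator_def using Delta_sub by auto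
  show "commutator ar M \<alpha> \<beta> \<subseteq> \<alpha>" unfolding commutator_def using TC_left[OF assms(2) s(2)] assms by auto
  show "commutator ar M \<alpha> \<beta> \<subseteq> \<beta>" unfolding commutator_def using TC_right[OF s(1) assms(3)] assms by auto
  show "commutator ar M \<alpha> \<beta> \<subseteq> Nabla M" unfolding commutator_def using TC_Nabla[OF alg s] Nabla_Con[OF alg] by auto
qed



definition rep :: "'a set \<Rightarrow> 'a" where "rep X = (SOME x. x \<in> X)"

definition proj :: "'a rel \<Rightarrow> 'a rel \<Rightarrow> 'a set rel" where
  "proj \<psi> \<phi> = (\<lambda>(x,y). (\<psi>``{x}, \<psi>``{y})) ` \<phi>"

definition lift :: "('f,'a) alg \<Rightarrow> 'a rel \<Rightarrow> 'a set rel \<Rightarrow> 'a rel" where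
  "lift A \<psi> \<phi>' = {(x,y). x \<in> carrier A \<and> y \<in> carrier A \<and> (\<psi>``{x}, \<psi>``{y}) \<in> \<phi>'}"

lemma carrier_q: "carrier (quot_alg A \<psi>) = carrier A // \<psi>"
  by (simp add: quot_alg_def)

lemma rep_fun: "rep = (\<lambda>X. SOME x. x \<in> X)"
  by (rule ext) (simp add: rep_def)

lemma ops_q_def: "ops (quot_alg A \<psi>) f Xs = \<psi>``{ops A f (map rep Xs)}"
  by (simp add: quot_alg_def rep_fun)

lemma cls_in: "x \<in> carrier A \<Longrightarrow> \<psi>``{x} \<in> carrier (quot_alg A \<psi>)"
  by (simp add: carrier_q quotientI)

lemma cls_eq: "\<psi> \<in> Con ar A \<Longrightarrow> x \<in> carrier A \<Longrightarrow> y \<in> carrier A \<Longrightarrow> (\<psi>``{x} = \<psi>``{y}) = ((x,y) \<in> \<psi>)"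
  using con_equiv eq_equiv_class_iff by metis

lemma rep_props:
  assumes \<psi>: "\<psi> \<in> Con ar A" and X: "X \<in> carrier (quot_alg A \<psi>)"
  shows "rep X \<in> X" "rep X \<in> carrier A" "\<psi>``{rep X} = X"
proof -
  have e: "equiv (carrier A) \<psi>" using con_equiv[OF \<psi>] .
  obtain x where x: "x \<in> carrier A" "X = \<psi>``{x}" using X by (auto simp: carrier_q elim: quotientE)
  have "x \<in> X" using x con_refl[OF \<psi>] by auto
  thus r: "rep X \<in> X" unfolding rep_def by (rule someI)
  hence xr: "(x, rep X) \<in> \<psi>" using x by auto
  thus "rep X \<in> carrier A" using con_sub[OF \<psi>] by auto
  show "\<psi>``{rep X} = X" using equiv_class_eq[OF e xr] x by simp
qed

lemma rep_cls: "\<psi> \<in> Con ar A \<Longrightarrow> x \<in> carrier A \<Longrightarrow> (rep (\<psi>``{x}), x) \<in> \<psi>"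
proof -
  assume \<psi>: "\<psi> \<in> Con ar A" and x: "x \<in> carrier A"
  have "rep (\<psi>``{x}) \<in> \<psi>``{x}" using rep_props(1)[OF \<psi> cls_in[OF x]] .
  hence "(x, rep (\<psi>``{x})) \<in> \<psi>" by auto
  thus ?thesis using con_sym[OF \<psi>] by blast
qed

lemma ops_q:
  assumes \<psi>: "\<psi> \<in> Con ar A" and l: "length xs = ar f" and s: "set xs \<subseteq> carrier A"
  shows "ops (quot_alg A \<psi>) f (map (\<lambda>x. \<psi>``{x}) xs) = \<psi>``{ops A f xs}"
proof -
  have "list_all2 (\<lambda>x y. (x, y) \<in> \<psi>) (map rep (map (\<lambda>x. \<psi>``{x}) xs)) xs"
    using s by (auto simp: list_all2_conv_all_nth intro!: rep_cls[OF \<psi>])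
  hence "(ops A f (map rep (map (\<lambda>x. \<psi>``{x}) xs)), ops A f xs) \<in> \<psi>"
    using con_ops[OF \<psi>] l by auto
  hence "\<psi>``{ops A f (map rep (map (\<lambda>x. \<psi>``{x}) xs))} = \<psi>``{ops A f xs}"
    using equiv_class_eq[OF con_equiv[OF \<psi>]] by blast
  thus ?thesis by (simp add: ops_q_def)
qed

lemma eval_q:
  assumes alg: "algebra ar A" and \<psi>: "\<psi> \<in> Con ar A"
  shows "wf_trm ar t \<Longrightarrow> (\<forall>i\<in>vars t. w i \<in> carrier A \<and> v i = \<psi>``{w i}) \<Longrightarrow>
     eval (quot_alg A \<psi>) v t = \<psi>``{eval A w t}"
proof (induct t)
  case (Var x) then show ?case by simp
next
  case (Fn f ts)
  have m: "map (eval (quot_alg A \<psi>) v) ts = map (\<lambda>x. \<psi>``{x}) (map (eval A w) ts)"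
    using Fn by auto
  have s: "set (map (eval A w) ts) \<subseteq> carrier A"
    using Fn eval_carrier[OF alg] by auto
  have l: "length (map (eval A w) ts) = ar f" using Fn by simp
  have "eval (quot_alg A \<psi>) v (Fn f ts) = ops (quot_alg A \<psi>) f (map (\<lambda>x. \<psi>``{x}) (map (eval A w) ts))"
    by (simp only: eval.simps m)
  also have "\<dots> = \<psi>``{ops A f (map (eval A w) ts)}" using ops_q[OF \<psi> l s] .
  finally show ?case by simp
qed

lemma proj_sub: "\<phi> \<in> Con ar A \<Longrightarrow> proj \<psi> \<phi> \<subseteq> carrier (quot_alg A \<psi>) \<times> carrier (quot_alg A \<psi>)"
  unfolding proj_def using con_sub cls_in by fastforce

lemma proj_iff:
  assumes \<psi>: "\<psi> \<in> Con ar A" and \<phi>: "\<phi> \<in> Con ar A" and sub: "\<psi> \<subseteq> \<phi>"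
    and X: "X \<in> carrier (quot_alg A \<psi>)" and Y: "Y \<in> carrier (quot_alg A \<psi>)"
  shows "(X,Y) \<in> proj \<psi> \<phi> \<longleftrightarrow> (rep X, rep Y) \<in> \<phi>"
proof
  assume "(X,Y) \<in> proj \<psi> \<phi>"
  then obtain x y where xy: "(x,y) \<in> \<phi>" "X = \<psi>``{x}" "Y = \<psi>``{y}" unfolding proj_def by auto
  have "rep X \<in> \<psi>``{x}" "rep Y \<in> \<psi>``{y}" using rep_props(1)[OF \<psi> X] rep_props(1)[OF \<psi> Y] xy by auto
  hence "(x, rep X) \<in> \<phi>" "(y, rep Y) \<in> \<phi>" using sub by auto
  thus "(rep X, rep Y) \<in> \<phi>" using xy(1) con_sym[OF \<phi>] con_trans[OF \<phi>] by metis
next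
  assume "(rep X, rep Y) \<in> \<phi>"
  hence "(\<psi>``{rep X}, \<psi>``{rep Y}) \<in> proj \<psi> \<phi>" unfolding proj_def by force
  thus "(X,Y) \<in> proj \<psi> \<phi>" using rep_props(3)[OF \<psi> X] rep_props(3)[OF \<psi> Y] by simp
qed

lemma proj_cls:
  assumes \<psi>: "\<psi> \<in> Con ar A" and \<phi>: "\<phi> \<in> Con ar A" and sub: "\<psi> \<subseteq> \<phi>"
    and x: "x \<in> carrier A" and y: "y \<in> carrier A"
  shows "(\<psi>``{x}, \<psi>``{y}) \<in> proj \<psi> \<phi> \<longleftrightarrow> (x, y) \<in> \<phi>"
proof -
  have "(rep (\<psi>``{x}), x) \<in> \<phi>" "(rep (\<psi>``{y}), y) \<in> \<phi>" using rep_cls[OF \<psi>] x y sub by auto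
  hence "(rep (\<psi>``{x}), rep (\<psi>``{y})) \<in> \<phi> \<longleftrightarrow> (x, y) \<in> \<phi>"
    using con_sym[OF \<phi>] con_trans[OF \<phi>] by metis
  thus ?thesis using proj_iff[OF \<psi> \<phi> sub cls_in[OF x] cls_in[OF y]] by simp
qed

lemma proj_Con:
  assumes \<psi>: "\<psi> \<in> Con ar A" and \<phi>: "\<phi> \<in> Con ar A" and sub: "\<psi> \<subseteq> \<phi>"
  shows "proj \<psi> \<phi> \<in> Con ar (quot_alg A \<psi>)"
  unfolding Con_def congruence_def mem_Collect_eq
proof (intro conjI allI impI)
  let ?Q = "carrier (quot_alg A \<psi>)"
  note pi = proj_iff[OF \<psi> \<phi> sub]
  have ps: "proj \<psi> \<phi> \<subseteq> ?Q \<times> ?Q" using proj_sub[OF \<phi>] .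
  show "equiv ?Q (proj \<psi> \<phi>)"
  proof (rule equivI)
    show "proj \<psi> \<phi> \<subseteq> ?Q \<times> ?Q" using ps .
    show "refl_on ?Q (proj \<psi> \<phi>)" unfolding refl_on_def
      using pi rep_props(2)[OF \<psi>] con_refl[OF \<phi>] by blast
    show "sym (proj \<psi> \<phi>)" unfolding sym_def
    proof (intro allI impI)
      fix X Y assume h: "(X,Y) \<in> proj \<psi> \<phi>"
      hence XY: "X \<in> ?Q" "Y \<in> ?Q" using ps by auto
      thus "(Y,X) \<in> proj \<psi> \<phi>" using h pi con_sym[OF \<phi>] by blast
    qed
    show "trans (proj \<psi> \<phi>)" unfolding trans_def
    proof (intro allI impI)
      fix X Y Z assume h: "(X,Y) \<in> proj \<psi> \<phi>" "(Y,Z) \<in> proj \<psi> \<phi>"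
      hence XY: "X \<in> ?Q" "Y \<in> ?Q" "Z \<in> ?Q" using ps by auto
      have "(rep X, rep Y) \<in> \<phi>" "(rep Y, rep Z) \<in> \<phi>" using h XY pi by auto
      hence "(rep X, rep Z) \<in> \<phi>" using con_trans[OF \<phi>] by blast
      thus "(X,Z) \<in> proj \<psi> \<phi>" using XY pi by blast
    qed
  qed
  fix f Xs Ys assume h: "length Xs = ar f \<and> length Ys = ar f \<and> list_all2 (\<lambda>x y. (x, y) \<in> proj \<psi> \<phi>) Xs Ys"
  have "list_all2 (\<lambda>x y. (x, y) \<in> \<phi>) (map rep Xs) (map rep Ys)"
    unfolding list_all2_conv_all_nth
  proof (intro conjI allI impI)
    show "length (map rep Xs) = length (map rep Ys)" using h by simp
    fix i assume "i < length (map rep Xs)"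
    hence i: "i < length Xs" "i < length Ys" using h by auto
    have "(Xs ! i, Ys ! i) \<in> proj \<psi> \<phi>" using h i by (auto simp: list_all2_conv_all_nth)
    moreover hence "Xs ! i \<in> ?Q" "Ys ! i \<in> ?Q" using ps by auto
    ultimately show "(map rep Xs ! i, map rep Ys ! i) \<in> \<phi>" using pi i by auto
  qed
  hence "(ops A f (map rep Xs), ops A f (map rep Ys)) \<in> \<phi>" using con_ops[OF \<phi>] h by auto
  hence "(\<psi>``{ops A f (map rep Xs)}, \<psi>``{ops A f (map rep Ys)}) \<in> proj \<psi> \<phi>"
    unfolding proj_def by force
  thus "(ops (quot_alg A \<psi>) f Xs, ops (quot_alg A \<psi>) f Ys) \<in> proj \<psi> \<phi>" by (simp add: ops_q_def)
qed

lemma lift_Con: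
  assumes alg: "algebra ar A" and \<psi>: "\<psi> \<in> Con ar A" and \<phi>: "\<phi> \<in> Con ar (quot_alg A \<psi>)"
  shows "lift A \<psi> \<phi> \<in> Con ar A"
  unfolding Con_def congruence_def mem_Collect_eq
proof (intro conjI allI impI)
  show "equiv (carrier A) (lift A \<psi> \<phi>)"
  proof (rule equivI)
    show "lift A \<psi> \<phi> \<subseteq> carrier A \<times> carrier A" unfolding lift_def by auto
    show "refl_on (carrier A) (lift A \<psi> \<phi>)" unfolding refl_on_def
    proof
      fix x assume x: "x \<in> carrier A"
      have "(\<psi>``{x}, \<psi>``{x}) \<in> \<phi>" using con_refl[OF \<phi> cls_in[OF x]] .
      thus "(x,x) \<in> lift A \<psi> \<phi>" using x unfolding lift_def by simp
    qed
    show "sym (lift A \<psi> \<phi>)" unfolding sym_def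
    proof (intro allI impI)
      fix x y assume "(x,y) \<in> lift A \<psi> \<phi>"
      thus "(y,x) \<in> lift A \<psi> \<phi>" unfolding lift_def using con_sym[OF \<phi>] by auto
    qed
    show "trans (lift A \<psi> \<phi>)" unfolding trans_def lift_def
    proof (intro allI impI)
      fix x y z assume "(x, y) \<in> {(x, y). x \<in> carrier A \<and> y \<in> carrier A \<and> (\<psi> `` {x}, \<psi> `` {y}) \<in> \<phi>}"
           "(y, z) \<in> {(x, y). x \<in> carrier A \<and> y \<in> carrier A \<and> (\<psi> `` {x}, \<psi> `` {y}) \<in> \<phi>}"
      thus "(x, z) \<in> {(x, y). x \<in> carrier A \<and> y \<in> carrier A \<and> (\<psi> `` {x}, \<psi> `` {y}) \<in> \<phi>}"
        using con_trans[OF \<phi>] by auto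
    qed
  qed
  fix f xs ys assume h: "length xs = ar f \<and> length ys = ar f \<and> list_all2 (\<lambda>x y. (x, y) \<in> lift A \<psi> \<phi>) xs ys"
  have s: "set xs \<subseteq> carrier A" "set ys \<subseteq> carrier A"
    using h by (auto simp: list_all2_conv_all_nth lift_def in_set_conv_nth)
  have "list_all2 (\<lambda>x y. (x, y) \<in> \<phi>) (map (\<lambda>x. \<psi>``{x}) xs) (map (\<lambda>x. \<psi>``{x}) ys)"
    using h by (auto simp: list_all2_conv_all_nth lift_def)
  hence "(ops (quot_alg A \<psi>) f (map (\<lambda>x. \<psi>``{x}) xs), ops (quot_alg A \<psi>) f (map (\<lambda>x. \<psi>``{x}) ys)) \<in> \<phi>"
    using con_ops[OF \<phi>] h by auto
  hence "(\<psi>``{ops A f xs}, \<psi>``{ops A f ys}) \<in> \<phi>" using ops_q[OF \<psi>] h s by auto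
  moreover have "ops A f xs \<in> carrier A" "ops A f ys \<in> carrier A"
    using alg h s unfolding algebra_def by blast+
  ultimately show "(ops A f xs, ops A f ys) \<in> lift A \<psi> \<phi>" unfolding lift_def by auto
qed



lemma lift_proj:
  assumes \<psi>: "\<psi> \<in> Con ar A" and \<phi>: "\<phi> \<in> Con ar A" and sub: "\<psi> \<subseteq> \<phi>"
  shows "lift A \<psi> (proj \<psi> \<phi>) = \<phi>"
proof
  show "lift A \<psi> (proj \<psi> \<phi>) \<subseteq> \<phi>" unfolding lift_def using proj_cls[OF \<psi> \<phi> sub] by auto
  show "\<phi> \<subseteq> lift A \<psi> (proj \<psi> \<phi>)"
  proof
    fix p assume p: "p \<in> \<phi>"
    obtain x y where xy: "p = (x,y)" by (cases p)
    have c: "x \<in> carrier A" "y \<in> carrier A" using con_sub[OF \<phi>] p xy by auto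
    show "p \<in> lift A \<psi> (proj \<psi> \<phi>)" unfolding lift_def using proj_cls[OF \<psi> \<phi> sub c] p xy c by auto
  qed
qed

lemma proj_lift:
  assumes \<psi>: "\<psi> \<in> Con ar A" and \<phi>: "\<phi> \<in> Con ar (quot_alg A \<psi>)"
  shows "proj \<psi> (lift A \<psi> \<phi>) = \<phi>"
proof
  show "proj \<psi> (lift A \<psi> \<phi>) \<subseteq> \<phi>" unfolding proj_def lift_def by auto
  show "\<phi> \<subseteq> proj \<psi> (lift A \<psi> \<phi>)"
  proof
    fix p assume p: "p \<in> \<phi>"
    obtain X Y where XY: "p = (X,Y)" by (cases p)
    have c: "X \<in> carrier (quot_alg A \<psi>)" "Y \<in> carrier (quot_alg A \<psi>)" using con_sub[OF \<phi>] p XY by auto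
    have "(rep X, rep Y) \<in> lift A \<psi> \<phi>" unfolding lift_def
      using rep_props[OF \<psi> c(1)] rep_props[OF \<psi> c(2)] p XY by auto
    hence "(\<psi>``{rep X}, \<psi>``{rep Y}) \<in> proj \<psi> (lift A \<psi> \<phi>)" unfolding proj_def by force
    thus "p \<in> proj \<psi> (lift A \<psi> \<phi>)" using rep_props(3)[OF \<psi> c(1)] rep_props(3)[OF \<psi> c(2)] XY by simp
  qed
qed

lemma lift_Nabla: "lift A \<psi> (Nabla (quot_alg A \<psi>)) = Nabla A"
  unfolding lift_def Nabla_def using cls_in by fastforce

lemma proj_Nabla: assumes \<psi>: "\<psi> \<in> Con ar A" shows "proj \<psi> (Nabla A) = Nabla (quot_alg A \<psi>)"
proof
  show "proj \<psi> (Nabla A) \<subseteq> Nabla (quot_alg A \<psi>)" unfolding proj_def Nabla_def using cls_in by fastforce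
  show "Nabla (quot_alg A \<psi>) \<subseteq> proj \<psi> (Nabla A)"
  proof
    fix p assume p: "p \<in> Nabla (quot_alg A \<psi>)"
    obtain X Y where XY: "p = (X,Y)" by (cases p)
    have c: "X \<in> carrier (quot_alg A \<psi>)" "Y \<in> carrier (quot_alg A \<psi>)" using p XY by (auto simp: Nabla_def)
    have "(rep X, rep Y) \<in> Nabla A" using rep_props(2)[OF \<psi> c(1)] rep_props(2)[OF \<psi> c(2)] by (simp add: Nabla_def)
    hence "(\<psi>``{rep X}, \<psi>``{rep Y}) \<in> proj \<psi> (Nabla A)" unfolding proj_def by force
    thus "p \<in> proj \<psi> (Nabla A)" using rep_props(3)[OF \<psi> c(1)] rep_props(3)[OF \<psi> c(2)] XY by simp
  qed
qed

lemma TC_lift: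
  assumes alg: "algebra ar A" and \<psi>: "\<psi> \<in> Con ar A" and \<mu>: "\<mu> \<in> Con ar (quot_alg A \<psi>)"
    and tc: "TC ar (quot_alg A \<psi>) \<alpha> \<beta> \<mu>"
  shows "TC ar A (lift A \<psi> \<alpha>) (lift A \<psi> \<beta>) (lift A \<psi> \<mu>)"
  unfolding TC_def
proof (intro allI impI)
  fix n k t a b c d
  assume h: "wf_trm ar t \<and> vars t \<subseteq> {..<n + k} \<and> (\<forall>i<n. (a i, b i) \<in> lift A \<psi> \<alpha>) \<and> (\<forall>j<k. (c j, d j) \<in> lift A \<psi> \<beta>)"
  let ?c = "\<lambda>f i. \<psi>``{f i}"
  have env: "\<And>x y. env2 n (?c x) (?c y) = (\<lambda>i. \<psi>``{env2 n x y i})"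
    by (rule ext) (simp add: env2_def)
  have ev: "\<And>x y. (\<forall>i<n. x i \<in> carrier A) \<Longrightarrow> (\<forall>j<k. y j \<in> carrier A) \<Longrightarrow>
      eval (quot_alg A \<psi>) (env2 n (?c x) (?c y)) t = \<psi>``{eval A (env2 n x y) t}
      \<and> eval A (env2 n x y) t \<in> carrier A"
  proof -
    fix x y assume x: "\<forall>i<n. x i \<in> carrier A" and y: "\<forall>j<k. y j \<in> carrier A"
    have cv: "\<forall>i\<in>vars t. env2 n x y i \<in> carrier A"
    proof
      fix i assume "i \<in> vars t" hence "i < n + k" using h by auto
      thus "env2 n x y i \<in> carrier A" using x y by (auto simp: env2_def)
    qed
    show "eval (quot_alg A \<psi>) (env2 n (?c x) (?c y)) t = \<psi>``{eval A (env2 n x y) t}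
      \<and> eval A (env2 n x y) t \<in> carrier A"
      unfolding env using eval_q[OF alg \<psi>, of t "env2 n x y" "\<lambda>i. \<psi>``{env2 n x y i}"] cv h
        eval_carrier[OF alg] by auto
  qed
  have A: "\<forall>i<n. a i \<in> carrier A" "\<forall>i<n. b i \<in> carrier A" using h by (auto simp: lift_def)
  have C: "\<forall>j<k. c j \<in> carrier A" "\<forall>j<k. d j \<in> carrier A" using h by (auto simp: lift_def)
  have tq: "((eval (quot_alg A \<psi>) (env2 n (?c a) (?c c)) t, eval (quot_alg A \<psi>) (env2 n (?c a) (?c d)) t) \<in> \<mu>) =
            ((eval (quot_alg A \<psi>) (env2 n (?c b) (?c c)) t, eval (quot_alg A \<psi>) (env2 n (?c b) (?c d)) t) \<in> \<mu>)"
    by (rule tc[unfolded TC_def, rule_format, of t n k "?c a" "?c b" "?c c" "?c d"]) (use h in \<open>auto simp: lift_def\<close>)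
  show "((eval A (env2 n a c) t, eval A (env2 n a d) t) \<in> lift A \<psi> \<mu>) =
        ((eval A (env2 n b c) t, eval A (env2 n b d) t) \<in> lift A \<psi> \<mu>)"
    using tq ev[OF A(1) C(1)] ev[OF A(1) C(2)] ev[OF A(2) C(1)] ev[OF A(2) C(2)] unfolding lift_def by auto
qed

lemma TC_proj:
  assumes alg: "algebra ar A" and \<psi>: "\<psi> \<in> Con ar A"
    and \<alpha>: "\<alpha> \<in> Con ar A" "\<psi> \<subseteq> \<alpha>" and \<beta>: "\<beta> \<in> Con ar A" "\<psi> \<subseteq> \<beta>" and \<mu>: "\<mu> \<in> Con ar A" "\<psi> \<subseteq> \<mu>"
    and tc: "TC ar A \<alpha> \<beta> \<mu>"
  shows "TC ar (quot_alg A \<psi>) (proj \<psi> \<alpha>) (proj \<psi> \<beta>) (proj \<psi> \<mu>)"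
  unfolding TC_def
proof (intro allI impI)
  let ?Q = "carrier (quot_alg A \<psi>)"
  fix n k t a b c d
  assume h: "wf_trm ar t \<and> vars t \<subseteq> {..<n + k} \<and> (\<forall>i<n. (a i, b i) \<in> proj \<psi> \<alpha>) \<and> (\<forall>j<k. (c j, d j) \<in> proj \<psi> \<beta>)"
  have A: "\<forall>i<n. a i \<in> ?Q \<and> b i \<in> ?Q" using h proj_sub[OF \<alpha>(1)] by blast
  have C: "\<forall>j<k. c j \<in> ?Q \<and> d j \<in> ?Q" using h proj_sub[OF \<beta>(1)] by blast
  have ab: "\<forall>i<n. (rep (a i), rep (b i)) \<in> \<alpha>" using h A proj_iff[OF \<psi> \<alpha>] by blast
  have cd: "\<forall>j<k. (rep (c j), rep (d j)) \<in> \<beta>" using h C proj_iff[OF \<psi> \<beta>] by blast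
  have ev: "\<And>x y. (\<forall>i<n. x i \<in> ?Q) \<Longrightarrow> (\<forall>j<k. y j \<in> ?Q) \<Longrightarrow>
      eval (quot_alg A \<psi>) (env2 n x y) t = \<psi>``{eval A (env2 n (rep \<circ> x) (rep \<circ> y)) t}
      \<and> eval A (env2 n (rep \<circ> x) (rep \<circ> y)) t \<in> carrier A"
  proof -
    fix x y assume x: "\<forall>i<n. x i \<in> ?Q" and y: "\<forall>j<k. y j \<in> ?Q"
    have cv: "\<forall>i\<in>vars t. env2 n (rep \<circ> x) (rep \<circ> y) i \<in> carrier A \<and>
         env2 n x y i = \<psi>``{env2 n (rep \<circ> x) (rep \<circ> y) i}"
    proof
      fix i assume "i \<in> vars t" hence "i < n + k" using h by auto
      thus "env2 n (rep \<circ> x) (rep \<circ> y) i \<in> carrier A \<and>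
         env2 n x y i = \<psi>``{env2 n (rep \<circ> x) (rep \<circ> y) i}"
        using x y rep_props[OF \<psi>] by (auto simp: env2_def)
    qed
    show "eval (quot_alg A \<psi>) (env2 n x y) t = \<psi>``{eval A (env2 n (rep \<circ> x) (rep \<circ> y)) t}
      \<and> eval A (env2 n (rep \<circ> x) (rep \<circ> y)) t \<in> carrier A"
      using eval_q[OF alg \<psi>, of t "env2 n (rep \<circ> x) (rep \<circ> y)" "env2 n x y"] cv h
        eval_carrier[OF alg] by auto
  qed
  have A1: "\<forall>i<n. a i \<in> ?Q" "\<forall>i<n. b i \<in> ?Q" using A by auto
  have C1: "\<forall>j<k. c j \<in> ?Q" "\<forall>j<k. d j \<in> ?Q" using C by auto
  have tA: "((eval A (env2 n (rep \<circ> a) (rep \<circ> c)) t, eval A (env2 n (rep \<circ> a) (rep \<circ> d)) t) \<in> \<mu>) =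
            ((eval A (env2 n (rep \<circ> b) (rep \<circ> c)) t, eval A (env2 n (rep \<circ> b) (rep \<circ> d)) t) \<in> \<mu>)"
    by (rule tc[unfolded TC_def, rule_format, of t n k "rep \<circ> a" "rep \<circ> b" "rep \<circ> c" "rep \<circ> d"]) (use h ab cd in auto)
  note pc = proj_cls[OF \<psi> \<mu>]
  show "((eval (quot_alg A \<psi>) (env2 n a c) t, eval (quot_alg A \<psi>) (env2 n a d) t) \<in> proj \<psi> \<mu>) =
        ((eval (quot_alg A \<psi>) (env2 n b c) t, eval (quot_alg A \<psi>) (env2 n b d) t) \<in> proj \<psi> \<mu>)"
    using tA ev[OF A1(1) C1(1)] ev[OF A1(1) C1(2)] ev[OF A1(2) C1(1)] ev[OF A1(2) C1(2)] pc by auto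
qed



lemma Nabla_sub_Con: "\<phi> \<in> Con ar M \<Longrightarrow> \<phi> \<subseteq> Nabla M"
  using con_sub by (auto simp: Nabla_def)

lemma comm_lift:
  assumes alg: "algebra ar A" and \<psi>: "\<psi> \<in> Con ar A"
    and \<alpha>: "\<alpha> \<in> Con ar (quot_alg A \<psi>)" and \<beta>: "\<beta> \<in> Con ar (quot_alg A \<psi>)"
  shows "commutator ar A (lift A \<psi> \<alpha>) (lift A \<psi> \<beta>) \<subseteq> lift A \<psi> (commutator ar (quot_alg A \<psi>) \<alpha> \<beta>)"
proof
  fix p assume p: "p \<in> commutator ar A (lift A \<psi> \<alpha>) (lift A \<psi> \<beta>)"
  obtain x y where xy: "p = (x,y)" by (cases p)
  have "p \<in> Nabla A" using comm_props(4)[OF alg lift_Con[OF alg \<psi> \<alpha>] lift_Con[OF alg \<psi> \<beta>]] p by auto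
  hence c: "x \<in> carrier A" "y \<in> carrier A" using xy by (auto simp: Nabla_def)
  have "(\<psi>``{x}, \<psi>``{y}) \<in> commutator ar (quot_alg A \<psi>) \<alpha> \<beta>"
    unfolding commutator_def
  proof (intro InterI)
    fix \<mu> assume "\<mu> \<in> {\<mu> \<in> Con ar (quot_alg A \<psi>). TC ar (quot_alg A \<psi>) \<alpha> \<beta> \<mu>}"
    hence m: "\<mu> \<in> Con ar (quot_alg A \<psi>)" "TC ar (quot_alg A \<psi>) \<alpha> \<beta> \<mu>" by auto
    have "lift A \<psi> \<mu> \<in> {\<mu> \<in> Con ar A. TC ar A (lift A \<psi> \<alpha>) (lift A \<psi> \<beta>) \<mu>}"
      using lift_Con[OF alg \<psi> m(1)] TC_lift[OF alg \<psi> m] by auto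
    hence "(x,y) \<in> lift A \<psi> \<mu>" using p xy unfolding commutator_def by blast
    thus "(\<psi>``{x}, \<psi>``{y}) \<in> \<mu>" unfolding lift_def by auto
  qed
  thus "p \<in> lift A \<psi> (commutator ar (quot_alg A \<psi>) \<alpha> \<beta>)" using xy c unfolding lift_def by auto
qed

lemma comm_proj:
  assumes alg: "algebra ar A" and \<psi>: "\<psi> \<in> Con ar A" and all: "\<forall>\<mu>\<in>Con ar A. \<psi> \<subseteq> \<mu>"
    and \<alpha>: "\<alpha> \<in> Con ar A" and \<beta>: "\<beta> \<in> Con ar A"
  shows "commutator ar (quot_alg A \<psi>) (proj \<psi> \<alpha>) (proj \<psi> \<beta>) \<subseteq> proj \<psi> (commutator ar A \<alpha> \<beta>)"
proof
  fix p assume p: "p \<in> commutator ar (quot_alg A \<psi>) (proj \<psi> \<alpha>) (proj \<psi> \<beta>)"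
  obtain X Y where XY: "p = (X,Y)" by (cases p)
  have inq: "\<And>\<mu>. \<mu> \<in> Con ar A \<Longrightarrow> TC ar A \<alpha> \<beta> \<mu> \<Longrightarrow> p \<in> proj \<psi> \<mu>"
  proof -
    fix \<mu> assume m: "\<mu> \<in> Con ar A" "TC ar A \<alpha> \<beta> \<mu>"
    have "proj \<psi> \<mu> \<in> {\<mu> \<in> Con ar (quot_alg A \<psi>). TC ar (quot_alg A \<psi>) (proj \<psi> \<alpha>) (proj \<psi> \<beta>) \<mu>}"
      using proj_Con[OF \<psi> m(1)] TC_proj[OF alg \<psi> \<alpha> _ \<beta> _ m(1) _ m(2)] all \<alpha> \<beta> m(1) by auto
    thus "p \<in> proj \<psi> \<mu>" using p unfolding commutator_def by blast
  qed
  have N: "Nabla A \<in> Con ar A" "TC ar A \<alpha> \<beta> (Nabla A)"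
    using Nabla_Con[OF alg] TC_Nabla[OF alg Nabla_sub_Con[OF \<alpha>] Nabla_sub_Con[OF \<beta>]] by auto
  have "p \<in> Nabla (quot_alg A \<psi>)" using inq[OF N] proj_Nabla[OF \<psi>] by simp
  hence c: "X \<in> carrier (quot_alg A \<psi>)" "Y \<in> carrier (quot_alg A \<psi>)" using XY by (auto simp: Nabla_def)
  have "(rep X, rep Y) \<in> commutator ar A \<alpha> \<beta>" unfolding commutator_def
  proof (intro InterI)
    fix \<mu> assume "\<mu> \<in> {\<mu> \<in> Con ar A. TC ar A \<alpha> \<beta> \<mu>}"
    hence m: "\<mu> \<in> Con ar A" "TC ar A \<alpha> \<beta> \<mu>" by auto
    show "(rep X, rep Y) \<in> \<mu>" using inq[OF m] XY proj_iff[OF \<psi> m(1) _ c] all m(1) by auto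
  qed
  hence "(\<psi>``{rep X}, \<psi>``{rep Y}) \<in> proj \<psi> (commutator ar A \<alpha> \<beta>)" unfolding proj_def by force
  thus "p \<in> proj \<psi> (commutator ar A \<alpha> \<beta>)" using rep_props(3)[OF \<psi> c(1)] rep_props(3)[OF \<psi> c(2)] XY by simp
qed

lemma lift_mono: "\<alpha> \<subseteq> \<beta> \<Longrightarrow> lift A \<psi> \<alpha> \<subseteq> lift A \<psi> \<beta>"
  unfolding lift_def by auto

lemma proj_mono: "\<alpha> \<subseteq> \<beta> \<Longrightarrow> proj \<psi> \<alpha> \<subseteq> proj \<psi> \<beta>"
  unfolding proj_def by auto

lemma prime_proj:
  assumes alg: "algebra ar A" and \<psi>: "\<psi> \<in> Con ar A" and pr: "prime_con ar A \<phi>" and sub: "\<psi> \<subseteq> \<phi>"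
  shows "prime_con ar (quot_alg A \<psi>) (proj \<psi> \<phi>)"
proof -
  have \<phi>: "\<phi> \<in> Con ar A" "\<phi> \<noteq> Nabla A" using pr by (auto simp: prime_con_def)
  have lp: "lift A \<psi> (proj \<psi> \<phi>) = \<phi>" using lift_proj[OF \<psi> \<phi>(1) sub] .
  have "proj \<psi> \<phi> \<noteq> Nabla (quot_alg A \<psi>)"
  proof
    assume "proj \<psi> \<phi> = Nabla (quot_alg A \<psi>)"
    hence "lift A \<psi> (proj \<psi> \<phi>) = Nabla A" using lift_Nabla by metis
    thus False using lp \<phi>(2) by simp
  qed
  moreover have "\<forall>\<alpha>\<in>Con ar (quot_alg A \<psi>). \<forall>\<beta>\<in>Con ar (quot_alg A \<psi>).
     commutator ar (quot_alg A \<psi>) \<alpha> \<beta> \<subseteq> proj \<psi> \<phi> \<longrightarrow> \<alpha> \<subseteq> proj \<psi> \<phi> \<or> \<beta> \<subseteq> proj \<psi> \<phi>"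
  proof (intro ballI impI)
    fix \<alpha> \<beta> assume \<alpha>: "\<alpha> \<in> Con ar (quot_alg A \<psi>)" and \<beta>: "\<beta> \<in> Con ar (quot_alg A \<psi>)"
      and h: "commutator ar (quot_alg A \<psi>) \<alpha> \<beta> \<subseteq> proj \<psi> \<phi>"
    have "commutator ar A (lift A \<psi> \<alpha>) (lift A \<psi> \<beta>) \<subseteq> \<phi>"
      using comm_lift[OF alg \<psi> \<alpha> \<beta>] lift_mono[OF h, of A] lp by blast
    hence "lift A \<psi> \<alpha> \<subseteq> \<phi> \<or> lift A \<psi> \<beta> \<subseteq> \<phi>"
      using pr lift_Con[OF alg \<psi> \<alpha>] lift_Con[OF alg \<psi> \<beta>] unfolding prime_con_def by blast
    thus "\<alpha> \<subseteq> proj \<psi> \<phi> \<or> \<beta> \<subseteq> proj \<psi> \<phi>"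
      using proj_mono[of "lift A \<psi> \<alpha>" \<phi> \<psi>] proj_mono[of "lift A \<psi> \<beta>" \<phi> \<psi>]
        proj_lift[OF \<psi> \<alpha>] proj_lift[OF \<psi> \<beta>] by auto
  qed
  ultimately show ?thesis unfolding prime_con_def using proj_Con[OF \<psi> \<phi>(1) sub] by blast
qed

lemma prime_lift:
  assumes alg: "algebra ar A" and \<psi>: "\<psi> \<in> Con ar A" and all: "\<forall>\<mu>\<in>Con ar A. \<psi> \<subseteq> \<mu>"
    and pr: "prime_con ar (quot_alg A \<psi>) \<phi>"
  shows "prime_con ar A (lift A \<psi> \<phi>)"
proof -
  have \<phi>: "\<phi> \<in> Con ar (quot_alg A \<psi>)" "\<phi> \<noteq> Nabla (quot_alg A \<psi>)" using pr by (auto simp: prime_con_def)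
  have pl: "proj \<psi> (lift A \<psi> \<phi>) = \<phi>" using proj_lift[OF \<psi> \<phi>(1)] .
  have "lift A \<psi> \<phi> \<noteq> Nabla A"
  proof
    assume "lift A \<psi> \<phi> = Nabla A"
    hence "proj \<psi> (lift A \<psi> \<phi>) = Nabla (quot_alg A \<psi>)" using proj_Nabla[OF \<psi>] by metis
    thus False using pl \<phi>(2) by simp
  qed
  moreover have "\<forall>\<alpha>\<in>Con ar A. \<forall>\<beta>\<in>Con ar A.
     commutator ar A \<alpha> \<beta> \<subseteq> lift A \<psi> \<phi> \<longrightarrow> \<alpha> \<subseteq> lift A \<psi> \<phi> \<or> \<beta> \<subseteq> lift A \<psi> \<phi>"
  proof (intro ballI impI)
    fix \<alpha> \<beta> assume \<alpha>: "\<alpha> \<in> Con ar A" and \<beta>: "\<beta> \<in> Con ar A"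
      and h: "commutator ar A \<alpha> \<beta> \<subseteq> lift A \<psi> \<phi>"
    have "commutator ar (quot_alg A \<psi>) (proj \<psi> \<alpha>) (proj \<psi> \<beta>) \<subseteq> \<phi>"
      using comm_proj[OF alg \<psi> all \<alpha> \<beta>] proj_mono[OF h, of \<psi>] pl by blast
    hence "proj \<psi> \<alpha> \<subseteq> \<phi> \<or> proj \<psi> \<beta> \<subseteq> \<phi>"
      using pr proj_Con[OF \<psi> \<alpha>] proj_Con[OF \<psi> \<beta>] all \<alpha> \<beta> unfolding prime_con_def by blast
    thus "\<alpha> \<subseteq> lift A \<psi> \<phi> \<or> \<beta> \<subseteq> lift A \<psi> \<phi>"
      using lift_mono[of "proj \<psi> \<alpha>" \<phi> A \<psi>] lift_mono[of "proj \<psi> \<beta>" \<phi> A \<psi>]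
        lift_proj[OF \<psi> \<alpha>] lift_proj[OF \<psi> \<beta>] all \<alpha> \<beta> by auto
  qed
  ultimately show ?thesis unfolding prime_con_def using lift_Con[OF alg \<psi> \<phi>(1)] by blast
qed



lemma radical_ann:
  assumes alg: "algebra ar A" and sp: "semiprime ar A" and \<theta>: "\<theta> \<in> Con ar A"
  shows "annihilator ar A \<theta> \<in> Con ar A" "radical ar A (annihilator ar A \<theta>) \<subseteq> annihilator ar A \<theta>"
proof -
  define U where "U = \<Union>{\<alpha> \<in> Con ar A. commutator ar A \<alpha> \<theta> = Delta A}"
  define \<psi> where "\<psi> = annihilator ar A \<theta>"
  have \<psi>U: "\<psi> = Cg ar A U" unfolding \<psi>_def U_def annihilator_def ..
  have UN: "U \<subseteq> Nabla A" unfolding U_def using Nabla_sub_Con by blast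
  have \<psi>: "\<psi> \<in> Con ar A" using Cg_Con[OF alg UN] \<psi>U by simp
  thus "annihilator ar A \<theta> \<in> Con ar A" unfolding \<psi>_def .
  define P where "P = {\<phi>. prime_con ar A \<phi> \<and> \<not> \<theta> \<subseteq> \<phi>}"
  define \<rho> where "\<rho> = Nabla A \<inter> \<Inter>P"
  have \<rho>: "\<rho> \<in> Con ar A" unfolding \<rho>_def by (rule Inter_Con[OF alg]) (auto simp: P_def prime_con_def)
  have P\<psi>: "\<And>\<phi>. \<phi> \<in> P \<Longrightarrow> \<psi> \<subseteq> \<phi>"
  proof -
    fix \<phi> assume "\<phi> \<in> P"
    hence pr: "prime_con ar A \<phi>" "\<not> \<theta> \<subseteq> \<phi>" by (auto simp: P_def)
    have "U \<subseteq> \<phi>" unfolding U_def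
    proof (intro Union_least)
      fix \<alpha> assume "\<alpha> \<in> {\<alpha> \<in> Con ar A. commutator ar A \<alpha> \<theta> = Delta A}"
      hence a: "\<alpha> \<in> Con ar A" "commutator ar A \<alpha> \<theta> = Delta A" by auto
      have "Delta A \<subseteq> \<phi>" using Delta_sub pr(1) by (auto simp: prime_con_def)
      hence "\<alpha> \<subseteq> \<phi> \<or> \<theta> \<subseteq> \<phi>" using pr(1) a \<theta> unfolding prime_con_def by blast
      thus "\<alpha> \<subseteq> \<phi>" using pr(2) by blast
    qed
    thus "\<psi> \<subseteq> \<phi>" using \<psi>U Cg_least pr(1) by (metis prime_con_def)
  qed
  have "commutator ar A \<rho> \<theta> \<subseteq> Delta A"
  proof -
    have "commutator ar A \<rho> \<theta> \<subseteq> radical ar A (Delta A)"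
      unfolding radical_def
    proof (intro Int_greatest Inter_greatest)
      show "commutator ar A \<rho> \<theta> \<subseteq> Nabla A" using comm_props(4)[OF alg \<rho> \<theta>] .
      fix \<phi> assume "\<phi> \<in> {\<phi>. prime_con ar A \<phi> \<and> Delta A \<subseteq> \<phi>}"
      hence pr: "prime_con ar A \<phi>" by auto
      show "commutator ar A \<rho> \<theta> \<subseteq> \<phi>"
      proof (cases "\<theta> \<subseteq> \<phi>")
        case True thus ?thesis using comm_props(3)[OF alg \<rho> \<theta>] by auto
      next
        case False hence "\<phi> \<in> P" using pr by (auto simp: P_def)
        hence "\<rho> \<subseteq> \<phi>" unfolding \<rho>_def by auto
        thus ?thesis using comm_props(2)[OF alg \<rho> \<theta>] by auto
      qed
    qed
    thus ?thesis using sp by (simp add: semiprime_def)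
  qed
  hence "commutator ar A \<rho> \<theta> = Delta A" using comm_props(1)[OF alg \<rho> \<theta>] by auto
  hence "\<rho> \<subseteq> U" unfolding U_def using \<rho> by auto
  hence \<rho>\<psi>: "\<rho> \<subseteq> \<psi>" using Cg_upper \<psi>U by blast
  have "P \<subseteq> {\<phi>. prime_con ar A \<phi> \<and> \<psi> \<subseteq> \<phi>}" using P\<psi> by (auto simp: P_def)
  hence "radical ar A \<psi> \<subseteq> \<rho>" unfolding radical_def \<rho>_def by blast
  thus "radical ar A (annihilator ar A \<theta>) \<subseteq> annihilator ar A \<theta>" using \<rho>\<psi> \<psi>_def by auto
qed

lemma semiprime_quot:
  assumes alg: "algebra ar A" and \<psi>: "\<psi> \<in> Con ar A" and rad: "radical ar A \<psi> \<subseteq> \<psi>"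
  shows "semiprime ar (quot_alg A \<psi>)"
proof -
  let ?q = "quot_alg A \<psi>"
  have "radical ar ?q (Delta ?q) \<subseteq> Delta ?q"
  proof
    fix p assume p: "p \<in> radical ar ?q (Delta ?q)"
    obtain X Y where XY: "p = (X,Y)" by (cases p)
    have c: "X \<in> carrier ?q" "Y \<in> carrier ?q" using p XY by (auto simp: radical_def Nabla_def)
    have "(rep X, rep Y) \<in> radical ar A \<psi>" unfolding radical_def
    proof (intro IntI InterI)
      show "(rep X, rep Y) \<in> Nabla A" using rep_props(2)[OF \<psi> c(1)] rep_props(2)[OF \<psi> c(2)] by (simp add: Nabla_def)
      fix \<phi> assume "\<phi> \<in> {\<phi>. prime_con ar A \<phi> \<and> \<psi> \<subseteq> \<phi>}"
      hence \<phi>: "prime_con ar A \<phi>" "\<psi> \<subseteq> \<phi>" by auto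
      have pp: "prime_con ar ?q (proj \<psi> \<phi>)" using prime_proj[OF alg \<psi> \<phi>] .
      hence "Delta ?q \<subseteq> proj \<psi> \<phi>" using Delta_sub by (auto simp: prime_con_def)
      hence "p \<in> proj \<psi> \<phi>" using p pp unfolding radical_def by auto
      thus "(rep X, rep Y) \<in> \<phi>" using proj_iff[OF \<psi> _ \<phi>(2) c] \<phi>(1) XY by (auto simp: prime_con_def)
    qed
    hence "(rep X, rep Y) \<in> \<psi>" using rad by auto
    hence "\<psi>``{rep X} = \<psi>``{rep Y}" using cls_eq[OF \<psi>] rep_props(2)[OF \<psi> c(1)] rep_props(2)[OF \<psi> c(2)] by auto
    hence "X = Y" using rep_props(3)[OF \<psi> c(1)] rep_props(3)[OF \<psi> c(2)] by simp
    thus "p \<in> Delta ?q" using XY c by (auto simp: Delta_def intro: Id_onI)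
  qed
  moreover have "Delta ?q \<subseteq> radical ar ?q (Delta ?q)"
    unfolding radical_def using Delta_sub by (auto simp: prime_con_def Delta_def Nabla_def)
  ultimately show ?thesis unfolding semiprime_def by auto
qed

lemma ann_Nabla:
  assumes alg: "algebra ar A" and comm_top: "\<forall>\<theta>\<in>Con ar A. commutator ar A \<theta> (Nabla A) = \<theta>"
  shows "annihilator ar A (Nabla A) = Delta A"
proof -
  have D: "Delta A \<in> Con ar A" using Delta_Con[OF alg] .
  have "\<Union>{\<alpha> \<in> Con ar A. commutator ar A \<alpha> (Nabla A) = Delta A} = Delta A"
  proof -
    have "{\<alpha> \<in> Con ar A. commutator ar A \<alpha> (Nabla A) = Delta A} = {Delta A}"
      using comm_top D by auto
    thus ?thesis by simp
  qed
  hence "annihilator ar A (Nabla A) = Cg ar A (Delta A)" unfolding annihilator_def by simp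
  also have "\<dots> = Delta A" using Cg_least[OF D] Cg_upper by blast
  finally show ?thesis .
qed

lemma semiprime_from_quot:
  assumes alg: "algebra ar A" and sp: "semiprime ar (quot_alg A (Delta A))"
  shows "semiprime ar A"
proof -
  let ?\<psi> = "Delta A"
  let ?q = "quot_alg A ?\<psi>"
  have \<psi>: "?\<psi> \<in> Con ar A" using Delta_Con[OF alg] .
  have all: "\<forall>\<mu>\<in>Con ar A. ?\<psi> \<subseteq> \<mu>" using Delta_sub by blast
  have "radical ar A (Delta A) \<subseteq> Delta A"
  proof
    fix p assume p: "p \<in> radical ar A (Delta A)"
    obtain x y where xy: "p = (x,y)" by (cases p)
    have c: "x \<in> carrier A" "y \<in> carrier A" using p xy by (auto simp: radical_def Nabla_def)
    have "(?\<psi>``{x}, ?\<psi>``{y}) \<in> radical ar ?q (Delta ?q)" unfolding radical_def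
    proof (intro IntI InterI)
      show "(?\<psi>``{x}, ?\<psi>``{y}) \<in> Nabla ?q" using cls_in[OF c(1)] cls_in[OF c(2)] by (simp add: Nabla_def)
      fix \<phi> assume "\<phi> \<in> {\<phi>. prime_con ar ?q \<phi> \<and> Delta ?q \<subseteq> \<phi>}"
      hence \<phi>: "prime_con ar ?q \<phi>" by auto
      have pl: "prime_con ar A (lift A ?\<psi> \<phi>)" using prime_lift[OF alg \<psi> all \<phi>] .
      hence "Delta A \<subseteq> lift A ?\<psi> \<phi>" using Delta_sub by (auto simp: prime_con_def)
      hence "p \<in> lift A ?\<psi> \<phi>" using p pl unfolding radical_def by auto
      thus "(?\<psi>``{x}, ?\<psi>``{y}) \<in> \<phi>" using xy by (auto simp: lift_def)
    qed
    hence "(?\<psi>``{x}, ?\<psi>``{y}) \<in> Delta ?q" using sp by (simp add: semiprime_def)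
    hence "(x,y) \<in> ?\<psi>" using cls_eq[OF \<psi> c] by (auto simp: Delta_def)
    thus "p \<in> Delta A" using xy by simp
  qed
  moreover have "Delta A \<subseteq> radical ar A (Delta A)"
    unfolding radical_def using Delta_sub by (auto simp: prime_con_def Delta_def Nabla_def)
  ultimately show ?thesis unfolding semiprime_def by auto
qed

theorem mainTheorem4:
  fixes ar :: "'f \<Rightarrow> nat"
    and \<Sigma> :: "('f trm \<times> 'f trm) set"
    and A :: "('f, 'a) alg"
  assumes wf_ids: "\<forall>(s, t)\<in>\<Sigma>. wf_trm ar s \<and> wf_trm ar t"
    and CM: "\<forall>M :: ('f, 'f trm set) alg. algebra ar M \<and> satisfies M \<Sigma> \<longrightarrow> cong_modular ar M"
    and A_alg: "algebra ar A"
    and A_in: "satisfies A \<Sigma>"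
    and comm_top: "\<forall>\<theta>\<in>Con ar A. commutator ar A \<theta> (Nabla A) = \<theta>"
  shows "(\<forall>\<theta>\<in>Con ar A. semiprime ar (quot_alg A (annihilator ar A \<theta>))) \<longleftrightarrow> semiprime ar A"
proof
  assume h: "\<forall>\<theta>\<in>Con ar A. semiprime ar (quot_alg A (annihilator ar A \<theta>))"
  have "semiprime ar (quot_alg A (annihilator ar A (Nabla A)))" using h Nabla_Con[OF A_alg] by blast
  thus "semiprime ar A" using semiprime_from_quot[OF A_alg] ann_Nabla[OF A_alg comm_top] by simp
next
  assume sp: "semiprime ar A"
  show "\<forall>\<theta>\<in>Con ar A. semiprime ar (quot_alg A (annihilator ar A \<theta>))"
  proof
    fix \<theta> assume \<theta>: "\<theta> \<in> Con ar A"
    show "semiprime ar (quot_alg A (annihilator ar A \<theta>))"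
      using semiprime_quot[OF A_alg radical_ann[OF A_alg sp \<theta>]] .
  qed
qed


end
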